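(* Let $d \ge 1$ and let $N_0, \ldots, N_{d-1}$ be positive integers (the extents of the dimensions of an iteration space, ordered by a fixed loop order). For each $m \in \{0,\ldots,d-1\}$ and each prefix $\bar{x}_m = (x_0,\ldots,x_{m-1})$ with $x_k \in \{0,\ldots,N_k-1\}$, let $\mathbf{C}_m(\,\cdot \mid \bar{x}_m) : \{0,1,\ldots,N_m\} \to \mathbb{R}_{\ge 0}$ be a cost function satisfying: (i) $\mathbf{C}_m(0 \mid \bar{x}_m) = 0$; (ii) (monotonicity) $\mathbf{C}_m(x \mid \bar{x}_m) \le \mathbf{C}_m(x+1 \mid \bar{x}_m)$ for all $0 \le x < N_m$; (iii) (hierarchical consistency) for every $m < d-1$ and every $x_m \in \{0,\ldots,N_m-1\}$, $\mathbf{C}_m(x_m+1 \mid \bar{x}_m) = \mathbf{C}_m(x_m \mid \bar{x}_m) + \mathbf{C}_{m+1}(N_{m+1} \mid \bar{x}_m, x_m)$. Define $\Delta_{d-1} = \max\big(\mathbf{C}_{d-1}(x+1 \mid \bar{x}_{d-1}) - \mathbf{C}_{d-1}(x \mid \bar{x}_{d-1})\big)$, the maximum taken over all prefixes $\bar{x}_{d-1}$ and all $0 \le x < N_{d-1}$. Let $\mathcal{Q}$ be a query cost with $0 \le \mathcal{Q} < \mathbf{C}_0(N_0)$, and let $\bar{x} = (x_0,\ldots,x_{d-1})$ be the output of the following procedure: set $\mathcal{R}_0 = \mathcal{Q}$; for $m = 0,1,\ldots,d-1$ in order, let $x_m$ be the largest $x \in \{0,\ldots,N_m-1\}$ with $\mathbf{C}_m(x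 \mid x_0,\ldots,x_{m-1}) \le \mathcal{R}_m$, and set $\mathcal{R}_{m+1} = \mathcal{R}_m - \mathbf{C}_m(x_m \mid x_0,\ldots,x_{m-1})$. Then, writing $\mathbf{C}(\bar{x}) = \sum_{m=0}^{d-1} \mathbf{C}_m(x_m \mid x_0,\ldots,x_{m-1})$, we have $0 \le \mathcal{Q} - \mathbf{C}(\bar{x}) < \Delta_{d-1}$.
   Context: $\mathbf{C}_m(x \mid x_0,\ldots,x_{m-1})$ models the cost of coiterating, in lexicographic order of the $d$-dimensional iteration space, from coordinate $(x_0,\ldots,x_{m-1},0,\ldots,0)$ up to (but excluding) coordinate $(x_0,\ldots,x_{m-1},x,0,\ldots,0)$; i.e. the cost of the subspace with the first $m$ coordinates fixed, the $m$-th coordinate in $[0,x)$, and all later coordinates ranging over their full extents. $\mathbf{C}(\bar{x})$ is then the total cost of coiteration from $(0,\ldots,0)$ to $\bar{x}$. The procedure in the claim is the "hierarchical search partitioning" algorithm, a per-dimension binary search for a coordinate whose prefix cost is at most the remaining query cost. *)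

theory Defs
  imports Main "HOL.Real"
begin

text \<open>Cost functions are modelled as C m xs x, where m is the dimension index,
  xs the prefix (x_0,...,x_{m-1}) as a list of length m, and x the coordinate.\<close>

definition valid_prefix :: "(nat \<Rightarrow> nat) \<Rightarrow> nat \<Rightarrow> nat list \<Rightarrow> bool" where
  "valid_prefix N m xs \<longleftrightarrow> length xs = m \<and> (\<forall>k<m. xs ! k < N k)"

fun hsp :: "(nat \<Rightarrow> nat list \<Rightarrow> nat \<Rightarrow> real) \<Rightarrow> (nat \<Rightarrow> nat) \<Rightarrow> nat \<Rightarrow> nat list \<Rightarrow> real \<Rightarrow> nat list" where
  "hsp C N 0 xs R = xs"
| "hsp C N (Suc k) xs R =
     (let m = length xs;
          x = (GREATEST x. x < N m \<and> C m xs x \<le> R)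
      in hsp C N k (xs @ [x]) (R - C m xs x))"

definition total_cost :: "(nat \<Rightarrow> nat list \<Rightarrow> nat \<Rightarrow> real) \<Rightarrow> nat \<Rightarrow> nat list \<Rightarrow> real" where
  "total_cost C d xs = (\<Sum>m<d. C m (take m xs) (xs ! m))"

definition Delta_last :: "(nat \<Rightarrow> nat list \<Rightarrow> nat \<Rightarrow> real) \<Rightarrow> (nat \<Rightarrow> nat) \<Rightarrow> nat \<Rightarrow> real" where
  "Delta_last C N d = Max {C (d - 1) xs (x + 1) - C (d - 1) xs x | xs x.
                           valid_prefix N (d - 1) xs \<and> x < N (d - 1)}"

end

theory Submission
  imports Defs
begin

lemma hsp_length: "length (hsp C N k xs R) = length xs + k"
  by (induction k arbitrary: xs R) (auto simp: Let_def)

lemma hsp_take: "take (length xs) (hsp C N k xs R) = xs"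
proof (induction k arbitrary: xs R)
  case 0 then show ?case by simp
next
  case (Suc k)
  let ?x = "GREATEST x. x < N (length xs) \<and> C (length xs) xs x \<le> R"
  have "take (length (xs @ [?x])) (hsp C N k (xs @ [?x]) (R - C (length xs) xs ?x)) = xs @ [?x]"
    by (rule Suc.IH)
  then have "take (length xs) (take (Suc (length xs)) (hsp C N k (xs @ [?x]) (R - C (length xs) xs ?x))) = xs"
    by simp
  then have "take (length xs) (hsp C N k (xs @ [?x]) (R - C (length xs) xs ?x)) = xs"
    by (simp add: min_def)
  then show ?case by (simp add: Let_def)
qed

lemma greatest_step:
  fixes f :: "nat \<Rightarrow> real"
  assumes "f 0 = 0" "0 \<le> R" "R < f n"
    and x_def: "x = (GREATEST x. x < n \<and> f x \<le> R)"
  shows "x < n \<and> f x \<le> R \<and> R < f (x+1)"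
proof -
  have n: "n > 0" using assms by (cases n) auto
  have b: "\<forall>y. y < n \<and> f y \<le> R \<longrightarrow> y \<le> n" by auto
  have P: "x < n \<and> f x \<le> R" unfolding x_def
    by (rule GreatestI_nat[of _ 0 n]) (use assms n in auto)
  have "R < f (x+1)"
  proof (cases "x + 1 < n")
    case True
    show ?thesis
    proof (rule ccontr)
      assume "\<not> R < f (x+1)"
      then have "x + 1 \<le> x" unfolding x_def
        using Greatest_le_nat[of "\<lambda>x. x < n \<and> f x \<le> R" "x+1" n] True b x_def by auto
      then show False by simp
    qed
  next
    case False
    then have "x + 1 = n" using P by auto
    then show ?thesis using assms by simp
  qed
  with P show ?thesis by simp
qed

theorem theorem1:
  fixes d :: nat and N :: "nat \<Rightarrow> nat" and C :: "nat \<Rightarrow> nat list \<Rightarrow> nat \<Rightarrow> real"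
    and Q :: real
  assumes d_pos: "d \<ge> 1"
    and N_pos: "\<And>k. k < d \<Longrightarrow> N k > 0"
    and C_nonneg: "\<And>m xs x. m < d \<Longrightarrow> valid_prefix N m xs \<Longrightarrow> x \<le> N m \<Longrightarrow> C m xs x \<ge> 0"
    and C_zero: "\<And>m xs. m < d \<Longrightarrow> valid_prefix N m xs \<Longrightarrow> C m xs 0 = 0"
    and C_mono: "\<And>m xs x. m < d \<Longrightarrow> valid_prefix N m xs \<Longrightarrow> x < N m \<Longrightarrow> C m xs x \<le> C m xs (x + 1)"
    and C_hier: "\<And>m xs x. m < d - 1 \<Longrightarrow> valid_prefix N m xs \<Longrightarrow> x < N m \<Longrightarrow>
                   C m xs (x + 1) = C m xs x + C (m + 1) (xs @ [x]) (N (m + 1))"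
    and Q_nonneg: "0 \<le> Q"
    and Q_lt: "Q < C 0 [] (N 0)"
  shows "0 \<le> Q - total_cost C d (hsp C N d [] Q)
       \<and> Q - total_cost C d (hsp C N d [] Q) < Delta_last C N d"
proof -
  have main: "\<And>xs R. length xs + Suc k = d \<Longrightarrow> valid_prefix N (length xs) xs \<Longrightarrow> 0 \<le> R \<Longrightarrow>
      R < C (length xs) xs (N (length xs)) \<Longrightarrow>
      \<exists>xl x. valid_prefix N (d - 1) xl \<and> x < N (d - 1) \<and>
         0 \<le> R - (\<Sum>i\<in>{length xs..<d}. C i (take i (hsp C N (Suc k) xs R)) (hsp C N (Suc k) xs R ! i)) \<and>
         R - (\<Sum>i\<in>{length xs..<d}. C i (take i (hsp C N (Suc k) xs R)) (hsp C N (Suc k) xs R ! i))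
           < C (d - 1) xl (x + 1) - C (d - 1) xl x" for k
  proof (induction k)
    case (0 xs R)
    define m where "m = length xs"
    define x where "x = (GREATEST x. x < N m \<and> C m xs x \<le> R)"
    have md: "m < d" "m = d - 1" using 0 m_def by auto
    have st: "x < N m \<and> C m xs x \<le> R \<and> R < C m xs (x+1)"
      using C_zero[of m xs] md(1) 0 m_def x_def by (intro greatest_step[of "C m xs"]) auto
    have h: "hsp C N (Suc 0) xs R = xs @ [x]" by (simp add: Let_def x_def m_def)
    have s: "(\<Sum>i\<in>{length xs..<d}. C i (take i (xs @ [x])) ((xs @ [x]) ! i)) = C m xs x"
      using 0(1) m_def by (simp flip: 0(1))
    show ?case
      apply (rule exI[of _ xs], rule exI[of _ x])
      unfolding h s using st md 0 m_def by auto
  next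
    case (Suc k xs R)
    define m where "m = length xs"
    define x where "x = (GREATEST x. x < N m \<and> C m xs x \<le> R)"
    have md: "m < d - 1" "m < d" using Suc.prems m_def by auto
    have st: "x < N m \<and> C m xs x \<le> R \<and> R < C m xs (x+1)"
      using C_zero[of m xs] md(2) Suc.prems m_def x_def by (intro greatest_step[of "C m xs"]) auto
    define ys where "ys = hsp C N (Suc k) (xs @ [x]) (R - C m xs x)"
    have h: "hsp C N (Suc (Suc k)) xs R = ys" by (simp add: Let_def x_def m_def ys_def)
    have vp: "valid_prefix N (length (xs @ [x])) (xs @ [x])"
      using Suc.prems(2) st m_def by (auto simp: valid_prefix_def nth_append less_Suc_eq)
    have hi: "C m xs (x + 1) = C m xs x + C (m + 1) (xs @ [x]) (N (m + 1))"
      using C_hier md(1) Suc.prems(2) st m_def by auto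
    have tk: "take (Suc m) ys = xs @ [x]" unfolding ys_def using hsp_take[of "xs @ [x]" C N "Suc k" "R - C m xs x"] m_def by (simp del: hsp.simps)
    have t1: "take m ys = xs"
    proof -
      have "take m ys = take m (take (Suc m) ys)" by (simp add: min_def)
      then show ?thesis using tk m_def by (simp del: take_take)
    qed
    have t2: "ys ! m = x"
    proof -
      have "ys ! m = take (Suc m) ys ! m" by simp
      then show ?thesis using tk m_def by (metis nth_append_length)
    qed
    have sm: "(\<Sum>i\<in>{m..<d}. C i (take i ys) (ys ! i)) =
         C m xs x + (\<Sum>i\<in>{Suc m..<d}. C i (take i ys) (ys ! i))"
      using md(2) t1 t2 by (simp add: sum.atLeast_Suc_lessThan)
    from Suc.IH[of "xs @ [x]" "R - C m xs x"]
    obtain xl y where "valid_prefix N (d - 1) xl \<and> y < N (d - 1) \<and>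
         0 \<le> (R - C m xs x) - (\<Sum>i\<in>{Suc m..<d}. C i (take i ys) (ys ! i)) \<and>
         (R - C m xs x) - (\<Sum>i\<in>{Suc m..<d}. C i (take i ys) (ys ! i))
           < C (d - 1) xl (y + 1) - C (d - 1) xl y"
      using Suc.prems vp st hi m_def ys_def by auto
    then show ?case unfolding h m_def[symmetric] sm by (intro exI[of _ xl] exI[of _ y]) auto
  qed
  have vp0: "valid_prefix N 0 []" by (simp add: valid_prefix_def)
  obtain k where k: "d = Suc k" using d_pos by (cases d) auto
  from main[of "[]" k Q] obtain xl x where xl: "valid_prefix N (d - 1) xl" "x < N (d - 1)"
    "0 \<le> Q - total_cost C d (hsp C N d [] Q)"
    "Q - total_cost C d (hsp C N d [] Q) < C (d - 1) xl (x + 1) - C (d - 1) xl x"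
    using k vp0 Q_nonneg Q_lt by (auto simp: total_cost_def lessThan_atLeast0)
  define M where "M = (\<Sum>k<d. N k)"
  have fin1: "finite {xs. valid_prefix N (d - 1) xs}"
  proof (rule finite_subset[OF _ finite_lists_length_eq[OF finite_lessThan[of M], of "d - 1"]])
    show "{xs. valid_prefix N (d - 1) xs} \<subseteq> {xs. set xs \<subseteq> {..<M} \<and> length xs = d - 1}"
    proof (clarify, intro conjI subsetI)
      fix xs y assume v: "valid_prefix N (d - 1) xs" and y: "y \<in> set xs"
      then obtain i where i: "i < d - 1" "xs ! i = y" by (auto simp: valid_prefix_def in_set_conv_nth)
      have "N i \<le> M" unfolding M_def using i(1) by (intro member_le_sum) auto
      then show "y \<in> {..<M}" using v i by (auto simp: valid_prefix_def)
    qed (auto simp: valid_prefix_def)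
  qed
  have eq: "{C (d - 1) xs (x + 1) - C (d - 1) xs x | xs x. valid_prefix N (d - 1) xs \<and> x < N (d - 1)}
     = (\<lambda>(xs, x). C (d - 1) xs (x + 1) - C (d - 1) xs x) ` ({xs. valid_prefix N (d - 1) xs} \<times> {..<N (d - 1)})"
    by auto
  have "C (d - 1) xl (x + 1) - C (d - 1) xl x \<le> Delta_last C N d"
    unfolding Delta_last_def eq
    by (rule Max_ge) (use fin1 xl in auto)
  with xl show ?thesis by linarith
qed

end
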